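(* Let $b:\mathbb R\to\mathbb R$ be twice differentiable with $0<L_b\le b''(z)\le U_b$ for all $z$. Let $m\ge1$, $\lambda\in(0,1]$, $G>0$, $A>0$, let $t\ge3$ be an integer, let $\boldsymbol\theta_0\in\mathbb R^p$, let $\mathbf g_1,\dots,\mathbf g_{t-1},\mathbf u\in\mathbb R^p$ satisfy $\|\mathbf g_s\|_2\le G\sqrt m$ and $\|\mathbf u\|_2\le G\sqrt m$, let $r_1,\dots,r_{t-1}\in\mathbb R$ satisfy $\sum_{s=1}^{t-1}r_s^2\le A\,t\log t$, and let $\alpha=\sqrt t$. Define $$\mathcal L(\boldsymbol\theta)=\sum_{s=1}^{t-1}\Big(b(\langle\mathbf g_s,\boldsymbol\theta-\boldsymbol\theta_0\rangle)-r_s\langle\mathbf g_s,\boldsymbol\theta-\boldsymbol\theta_0\rangle\Big)+\frac{m\lambda}{2}\|\boldsymbol\theta-\boldsymbol\theta_0\|_2^2-\alpha\langle\mathbf u,\boldsymbol\theta-\boldsymbol\theta_0\rangle,$$ and the gradient-descent iterates $\boldsymbol\theta^{(0)}=\boldsymbol\theta_0$, $\boldsymbol\theta^{(j)}=\boldsymbol\theta^{(j-1)}-\eta\nabla\mathcal L(\boldsymbol\theta^{(j-1)})$ with $0<\eta\le(m\lambda+U_b\,t\,m\,G^2)^{-1}$. Then there is a constant $E>0$ depending only on $G,A,L_b,b(0),b'(0)$ such that for every $j\ge0$, $$\|\boldsymbol\theta^{(j)}-\boldsymbol\theta_0\|_2\le E\sqrt{\frac{t\log t}{m\lambda^2}}.$$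 *)

theory Defs
  imports "HOL-Analysis.Analysis"
begin

text \<open>Vectors in R^p are represented as functions nat \<Rightarrow> real; only the
coordinates 0..p-1 matter (inner product, norm and gradient only look at them).\<close>

definition ipp :: "nat \<Rightarrow> (nat \<Rightarrow> real) \<Rightarrow> (nat \<Rightarrow> real) \<Rightarrow> real" where
  "ipp p x y = (\<Sum>i<p. x i * y i)"

definition nrmp :: "nat \<Rightarrow> (nat \<Rightarrow> real) \<Rightarrow> real" where
  "nrmp p x = sqrt (ipp p x x)"

definition gradp :: "nat \<Rightarrow> ((nat \<Rightarrow> real) \<Rightarrow> real) \<Rightarrow> (nat \<Rightarrow> real) \<Rightarrow> (nat \<Rightarrow> real)" where
  "gradp p f \<theta> = (\<lambda>i. if i < p then deriv (\<lambda>x. f (\<theta>(i := x))) (\<theta> i) else 0)"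

fun gd :: "nat \<Rightarrow> ((nat \<Rightarrow> real) \<Rightarrow> real) \<Rightarrow> real \<Rightarrow> (nat \<Rightarrow> real) \<Rightarrow> nat \<Rightarrow> (nat \<Rightarrow> real)" where
  "gd p f \<eta> \<theta>0 0 = \<theta>0"
| "gd p f \<eta> \<theta>0 (Suc j) =
     (\<lambda>i. gd p f \<eta> \<theta>0 j i - \<eta> * gradp p f (gd p f \<eta> \<theta>0 j) i)"

definition lossL :: "(real \<Rightarrow> real) \<Rightarrow> nat \<Rightarrow> nat \<Rightarrow> (nat \<Rightarrow> nat \<Rightarrow> real) \<Rightarrow> (nat \<Rightarrow> real)
   \<Rightarrow> (nat \<Rightarrow> real) \<Rightarrow> (nat \<Rightarrow> real) \<Rightarrow> nat \<Rightarrow> real \<Rightarrow> (nat \<Rightarrow> real) \<Rightarrow> real" where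
  "lossL b p t g r u \<theta>0 m lam \<theta> =
     (let d = (\<lambda>i. \<theta> i - \<theta>0 i) in
      (\<Sum>s=1..t-1. b (ipp p (g s) d) - r s * ipp p (g s) d)
      + real m * lam / 2 * (nrmp p d)\<^sup>2 - sqrt (real t) * ipp p u d)"

end

theory Submission
  imports Defs
begin

lemma ipp_self_nonneg: "ipp p x x \<ge> 0"
  unfolding ipp_def by (auto intro: sum_nonneg)

lemma nrmp_sq: "(nrmp p x)\<^sup>2 = ipp p x x"
  unfolding nrmp_def using ipp_self_nonneg by simp

lemma ipp_comm: "ipp p x y = ipp p y x"
  unfolding ipp_def by (simp add: mult.commute)

lemma ipp_cong: "(\<And>k. k < p \<Longrightarrow> y k = z k) \<Longrightarrow> ipp p x y = ipp p x z"
  unfolding ipp_def by (rule sum.cong) auto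

lemma ipp_lin: "ipp p x (\<lambda>k. a k - c * w k) = ipp p x a - c * ipp p x w"
  unfolding ipp_def by (simp add: algebra_simps sum_subtractf sum_distrib_left)

lemma ipp_CS: "(ipp p x y)\<^sup>2 \<le> ipp p x x * ipp p y y"
  unfolding ipp_def using Cauchy_Schwarz_ineq_sum[of x y "{..<p}"] by (simp add: power2_eq_square)

lemma ipp_upd:
  assumes "i < p"
  shows "ipp p y (\<lambda>k. (\<theta>(i:=x)) k - \<theta>0 k) = ipp p y (\<lambda>k. \<theta> k - \<theta>0 k) + y i * (x - \<theta> i)"
proof -
  have "ipp p y (\<lambda>k. (\<theta>(i:=x)) k - \<theta>0 k)
      = (\<Sum>k<p. y k * (\<theta> k - \<theta>0 k) + (if k = i then y i * (x - \<theta> i) else 0))"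
    unfolding ipp_def by (rule sum.cong) (auto simp: algebra_simps)
  also have "\<dots> = ipp p y (\<lambda>k. \<theta> k - \<theta>0 k) + y i * (x - \<theta> i)"
    using assms by (simp add: sum.distrib ipp_def)
  finally show ?thesis .
qed

lemma ipp_upd2:
  assumes "i < p"
  shows "ipp p (\<lambda>k. (\<theta>(i:=x)) k - \<theta>0 k) (\<lambda>k. (\<theta>(i:=x)) k - \<theta>0 k)
     = ipp p (\<lambda>k. \<theta> k - \<theta>0 k) (\<lambda>k. \<theta> k - \<theta>0 k) + ((x - \<theta>0 i)\<^sup>2 - (\<theta> i - \<theta>0 i)\<^sup>2)"
proof -
  have "ipp p (\<lambda>k. (\<theta>(i:=x)) k - \<theta>0 k) (\<lambda>k. (\<theta>(i:=x)) k - \<theta>0 k)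
      = (\<Sum>k<p. (\<theta> k - \<theta>0 k) * (\<theta> k - \<theta>0 k) + (if k = i then ((x - \<theta>0 i)\<^sup>2 - (\<theta> i - \<theta>0 i)\<^sup>2) else 0))"
    unfolding ipp_def by (rule sum.cong) (auto simp: algebra_simps power2_eq_square)
  also have "\<dots> = ipp p (\<lambda>k. \<theta> k - \<theta>0 k) (\<lambda>k. \<theta> k - \<theta>0 k) + ((x - \<theta>0 i)\<^sup>2 - (\<theta> i - \<theta>0 i)\<^sup>2)"
    using assms by (simp add: sum.distrib ipp_def)
  finally show ?thesis .
qed


lemma ipp_sumlin: "ipp p (\<lambda>k. \<Sum>s\<in>S. c s * h s k) v = (\<Sum>s\<in>S. c s * ipp p (h s) v)"
  unfolding ipp_def by (simp add: sum_distrib_right sum_distrib_left mult.assoc sum.swap[of _ "{..<p}"])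

lemma ipp_lin1: "ipp p (\<lambda>k. a k + c * w k - e * z k) v = ipp p a v + c * ipp p w v - e * ipp p z v"
  unfolding ipp_def by (simp add: algebra_simps sum_subtractf sum.distrib sum_distrib_left)

lemma ipp_zero: "ipp p y (\<lambda>k. 0) = 0"
  unfolding ipp_def by simp

lemma ipp_abs: "\<bar>ipp p x y\<bar> \<le> nrmp p x * nrmp p y"
proof -
  have "\<bar>ipp p x y\<bar> = sqrt ((ipp p x y)\<^sup>2)" by simp
  also have "\<dots> \<le> sqrt (ipp p x x * ipp p y y)" using ipp_CS real_sqrt_le_mono by blast
  also have "\<dots> = nrmp p x * nrmp p y" unfolding nrmp_def by (simp add: real_sqrt_mult)
  finally show ?thesis .
qed

lemma aux_lin: "0 \<le> 2 * (Z + W) \<Longrightarrow> - W \<le> (Z::real)" by (simp add: algebra_simps)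

lemma quad:
  fixes a bb c N :: real
  assumes "a > 0" "bb \<ge> 0" "c \<ge> 0" "N \<ge> 0" "a * N\<^sup>2 \<le> bb * N + c"
  shows "N \<le> bb / a + sqrt (c / a)"
proof (rule ccontr)
  assume "\<not> ?thesis"
  hence N: "N > bb / a + sqrt (c / a)" by simp
  define s where "s = sqrt (c / a)"
  have s0: "s \<ge> 0" unfolding s_def using assms by simp
  have "s * s = c / a" unfolding s_def using assms by simp
  hence as2: "a * s * s = c" using assms by (simp add: field_simps mult.assoc)
  have ba: "bb / a \<ge> 0" using assms by simp
  have Ns: "N > s" using N ba unfolding s_def by linarith
  have "a * N > a * (bb / a + s)" using N assms unfolding s_def[symmetric]
    by (intro mult_strict_left_mono) auto
  also have "a * (bb / a + s) = bb + a * s" using assms by (simp add: distrib_left)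
  finally have "a * N > bb + a * s" .
  hence k: "a * N - bb > a * s" by simp
  have as0: "a * s \<ge> 0" using assms s0 by simp
  have "N * (a * N - bb) > N * (a * s)"
    using k Ns s0 by (intro mult_strict_left_mono) auto
  moreover have "N * (a * s) \<ge> s * (a * s)"
    using Ns as0 by (intro mult_right_mono) auto
  ultimately have "N * (a * N - bb) > c" using as2 by (simp add: algebra_simps)
  thus False using assms(5) by (simp add: algebra_simps power2_eq_square)
qed

lemma finish:
  fixes G C N lam :: real and m t :: nat
  assumes m1: "m \<ge> 1" and lam0: "0 < lam" and lam1: "lam \<le> 1" and t3: "t \<ge> 3" and G0: "G > 0"
    and C0: "C \<ge> 0" and N0: "N \<ge> 0"
    and q: "real m * lam / 2 * N\<^sup>2 \<le> sqrt (real t) * (G * sqrt (real m)) * N + C * (real t * ln (real t))"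
  shows "N \<le> (2 * G + sqrt (2 * C)) * sqrt (real t * ln (real t) / (real m * lam\<^sup>2))"
proof -
  define T where "T = real t * ln (real t)"
  have ln1: "ln (real t) \<ge> 1"
    using t3 exp_le by (subst ln_ge_iff) auto
  have tT: "real t \<le> T" unfolding T_def using ln1 t3 by (simp add: mult_le_cancel_left1)
  have m0: "real m > 0" using m1 by simp
  define a where "a = real m * lam / 2"
  have a0: "a > 0" unfolding a_def using m0 lam0 by simp
  have N1: "N \<le> sqrt (real t) * (G * sqrt (real m)) / a + sqrt (C * T / a)"
    using quad[OF a0 _ _ N0] q G0 C0 tT t3 unfolding a_def T_def by (simp add: mult_nonneg_nonneg)
  define Q where "Q = sqrt (T / (real m * lam\<^sup>2))"
  have Qe: "Q = sqrt T / (sqrt (real m) * lam)"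
    unfolding Q_def using lam0 by (simp add: real_sqrt_divide real_sqrt_mult)
  have sm: "sqrt (real m) * sqrt (real m) = real m" using m0 by simp
  have "sqrt (real t) * (G * sqrt (real m)) / a = 2 * G * sqrt (real t) / (sqrt (real m) * lam)"
    unfolding a_def using m0 lam0 sm by (simp add: field_simps)
  also have "\<dots> \<le> 2 * G * sqrt T / (sqrt (real m) * lam)"
    using G0 m0 lam0 tT by (intro divide_right_mono mult_left_mono) auto
  finally have b1: "sqrt (real t) * (G * sqrt (real m)) / a \<le> 2 * G * Q" using Qe by simp
  have "C * T / a = 2 * C * T / (real m * lam)" unfolding a_def by simp
  also have "\<dots> \<le> 2 * C * T / (real m * lam\<^sup>2)"
  proof (rule divide_left_mono)
    show "0 \<le> 2 * C * T" using C0 tT by simp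
    show "0 < real m * lam * (real m * lam\<^sup>2)" using m0 lam0 by simp
    show "real m * lam\<^sup>2 \<le> real m * lam" using m0 lam0 lam1
      by (intro mult_left_mono) (auto simp: power2_eq_square mult_le_cancel_left1)
  qed
  finally have "sqrt (C * T / a) \<le> sqrt (2 * C * T / (real m * lam\<^sup>2))" by simp
  also have "\<dots> = sqrt (2 * C) * Q" unfolding Q_def by (simp add: real_sqrt_mult[symmetric])
  finally have b2: "sqrt (C * T / a) \<le> sqrt (2 * C) * Q" .
  show ?thesis using N1 b1 b2 unfolding Q_def T_def by (simp add: algebra_simps)
qed

context
  fixes b :: "real \<Rightarrow> real" and Lb Ub :: real
  assumes bd: "\<forall>z. b differentiable at z" and bd2: "\<forall>z. deriv b differentiable at z"
    and bds: "\<forall>z. Lb \<le> deriv (deriv b) z \<and> deriv (deriv b) z \<le> Ub"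
begin

lemma bD: "(b has_real_derivative deriv b z) (at z)"
  using bd DERIV_deriv_iff_real_differentiable by blast

lemma bD2: "(deriv b has_real_derivative deriv (deriv b) z) (at z)"
  using bd2 DERIV_deriv_iff_real_differentiable by blast

lemma b_taylor: "\<exists>\<xi>. b y = b x + deriv b x * (y - x) + deriv (deriv b) \<xi> / 2 * (y - x)\<^sup>2"
proof (cases "y = x")
  case True thus ?thesis by simp
next
  case False
  define diff where "diff = (\<lambda>k::nat. if k = 0 then b else if k = 1 then deriv b else deriv (deriv b))"
  have "\<exists>t. (if y < x then y < t \<and> t < x else x < t \<and> t < y) \<and>
    b y = (\<Sum>m<2. (diff m x / fact m) * (y - x)^m) + (diff 2 t / fact 2) * (y - x)^2"
    apply (rule Taylor[of 2 diff b "min x y" "max x y"])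
    using False bD bD2 by (auto simp: diff_def less_2_cases_iff)
  then obtain \<xi> where "b y = (\<Sum>m<2. (diff m x / fact m) * (y - x)^m) + (diff 2 \<xi> / fact 2) * (y - x)^2"
    by blast
  hence "b y = b x + deriv b x * (y - x) + deriv (deriv b) \<xi> / 2 * (y - x)\<^sup>2"
    by (simp add: diff_def numeral_2_eq_2)
  thus ?thesis by blast
qed

lemma b_upper: "b y \<le> b x + deriv b x * (y - x) + Ub / 2 * (y - x)\<^sup>2"
proof -
  obtain \<xi> where e: "b y = b x + deriv b x * (y - x) + deriv (deriv b) \<xi> / 2 * (y - x)\<^sup>2"
    using b_taylor by blast
  have "deriv (deriv b) \<xi> / 2 * (y - x)\<^sup>2 \<le> Ub / 2 * (y - x)\<^sup>2"
    using bds by (intro mult_right_mono) auto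
  thus ?thesis using e by linarith
qed

lemma b_lower: "b y \<ge> b x + deriv b x * (y - x) + Lb / 2 * (y - x)\<^sup>2"
proof -
  obtain \<xi> where e: "b y = b x + deriv b x * (y - x) + deriv (deriv b) \<xi> / 2 * (y - x)\<^sup>2"
    using b_taylor by blast
  have "deriv (deriv b) \<xi> / 2 * (y - x)\<^sup>2 \<ge> Lb / 2 * (y - x)\<^sup>2"
    using bds by (intro mult_right_mono) auto
  thus ?thesis using e by linarith
qed

lemma grad_eq:
  assumes "i < p"
  shows "gradp p (lossL b p t g r u \<theta>0 m lam) \<theta> i =
    (\<Sum>s=1..t-1. (deriv b (ipp p (g s) (\<lambda>k. \<theta> k - \<theta>0 k)) - r s) * g s i)
      + real m * lam * (\<theta> i - \<theta>0 i) - sqrt (real t) * u i"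
proof -
  define d where "d = (\<lambda>k. \<theta> k - \<theta>0 k)"
  define Ef where "Ef = (\<lambda>x. (\<Sum>s=1..t-1. b (ipp p (g s) d + g s i * (x - \<theta> i))
          - r s * (ipp p (g s) d + g s i * (x - \<theta> i)))
      + real m * lam / 2 * (ipp p d d + ((x - \<theta>0 i)\<^sup>2 - (\<theta> i - \<theta>0 i)\<^sup>2))
      - sqrt (real t) * (ipp p u d + u i * (x - \<theta> i)))"
  have eq: "(\<lambda>x. lossL b p t g r u \<theta>0 m lam (\<theta>(i := x))) = Ef"
    unfolding lossL_def Let_def Ef_def d_def nrmp_sq ipp_upd2[OF assms]
    unfolding ipp_upd[OF assms] ..
  have "(Ef has_real_derivative
     (\<Sum>s=1..t-1. (deriv b (ipp p (g s) d) - r s) * g s i)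
      + real m * lam * (\<theta> i - \<theta>0 i) - sqrt (real t) * u i) (at (\<theta> i))"
    unfolding Ef_def
    apply (auto intro!: derivative_eq_intros bD[THEN DERIV_chain2])
    apply (simp add: algebra_simps)
    apply (simp add: field_simps)
    done
  hence "deriv Ef (\<theta> i) = (\<Sum>s=1..t-1. (deriv b (ipp p (g s) d) - r s) * g s i)
      + real m * lam * (\<theta> i - \<theta>0 i) - sqrt (real t) * u i"
    by (rule DERIV_imp_deriv)
  thus ?thesis using assms unfolding gradp_def eq d_def by simp
qed


lemma descent:
  fixes G :: real
  assumes Ub0: "Ub \<ge> 0" and G0: "G > 0"
    and gn: "\<forall>s\<in>{1..t-1}. nrmp p (g s) \<le> G * sqrt (real m)"
    and lam0: "lam > 0" and eta0: "\<eta> > 0"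
    and etaK: "\<eta> * (real m * lam + Ub * real t * real m * G\<^sup>2) \<le> 1"
  shows "lossL b p t g r u \<theta>0 m lam (\<lambda>i. \<theta> i - \<eta> * gradp p (lossL b p t g r u \<theta>0 m lam) \<theta> i)
         \<le> lossL b p t g r u \<theta>0 m lam \<theta>"
proof -
  define F where "F = lossL b p t g r u \<theta>0 m lam"
  define d where "d = (\<lambda>k. \<theta> k - \<theta>0 k)"
  define X where "X = (\<lambda>s. ipp p (g s) d)"
  define c where "c = (\<lambda>s. deriv b (X s) - r s)"
  define v where "v = (\<lambda>k. (\<Sum>s=1..t-1. c s * g s k) + real m * lam * d k - sqrt (real t) * u k)"
  define \<theta>' where "\<theta>' = (\<lambda>i. \<theta> i - \<eta> * gradp p F \<theta> i)"
  define d' where "d' = (\<lambda>k. \<theta>' k - \<theta>0 k)"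
  define Y where "Y = (\<lambda>s. ipp p (g s) v)"
  define V where "V = ipp p v v"
  have w: "\<And>k. k < p \<Longrightarrow> gradp p F \<theta> k = v k"
    unfolding F_def v_def c_def X_def d_def by (rule grad_eq)
  have d'v: "\<And>y. ipp p y d' = ipp p y d - \<eta> * ipp p y v"
  proof -
    fix y
    have "ipp p y d' = ipp p y (\<lambda>k. d k - \<eta> * v k)"
      by (rule ipp_cong) (simp add: d'_def \<theta>'_def d_def w)
    thus "ipp p y d' = ipp p y d - \<eta> * ipp p y v" by (simp add: ipp_lin)
  qed
  have d'd': "ipp p d' d' = ipp p d d - 2 * \<eta> * ipp p d v + \<eta>\<^sup>2 * V"
  proof -
    have "ipp p d' d' = ipp p d' d - \<eta> * ipp p d' v" by (rule d'v)
    also have "ipp p d' d = ipp p d d - \<eta> * ipp p d v" by (subst ipp_comm) (rule d'v)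
    also have "ipp p d' v = ipp p v d - \<eta> * V" unfolding V_def by (subst ipp_comm) (rule d'v)
    finally show ?thesis by (simp add: ipp_comm[of p v d] power2_eq_square algebra_simps)
  qed
  have Fth: "F \<theta> = (\<Sum>s=1..t-1. b (X s) - r s * X s) + real m * lam / 2 * ipp p d d - sqrt (real t) * ipp p u d"
    unfolding F_def lossL_def Let_def X_def d_def nrmp_sq ..
  have Fth': "F \<theta>' = (\<Sum>s=1..t-1. b (X s - \<eta> * Y s) - r s * (X s - \<eta> * Y s))
      + real m * lam / 2 * (ipp p d d - 2 * \<eta> * ipp p d v + \<eta>\<^sup>2 * V)
      - sqrt (real t) * (ipp p u d - \<eta> * ipp p u v)"
    unfolding F_def lossL_def Let_def nrmp_sq
    using d'v d'd' unfolding d'_def X_def Y_def F_def by simp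
  have key: "(\<Sum>s=1..t-1. c s * Y s) + real m * lam * ipp p d v - sqrt (real t) * ipp p u v = V"
  proof -
    have "V = ipp p (\<lambda>k. (\<Sum>s=1..t-1. c s * g s k) + real m * lam * d k - sqrt (real t) * u k) v"
      unfolding V_def v_def ..
    also have "\<dots> = ipp p (\<lambda>k. (\<Sum>s=1..t-1. c s * g s k)) v + real m * lam * ipp p d v - sqrt (real t) * ipp p u v"
      by (rule ipp_lin1)
    also have "ipp p (\<lambda>k. (\<Sum>s=1..t-1. c s * g s k)) v = (\<Sum>s=1..t-1. c s * Y s)"
      unfolding Y_def by (rule ipp_sumlin)
    finally show ?thesis by (simp add: ipp_comm)
  qed
  have V0: "V \<ge> 0" unfolding V_def by (rule ipp_self_nonneg)
  have bsum: "(\<Sum>s=1..t-1. b (X s - \<eta> * Y s) - r s * (X s - \<eta> * Y s))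
      \<le> (\<Sum>s=1..t-1. (b (X s) - r s * X s) - \<eta> * (c s * Y s) + Ub / 2 * \<eta>\<^sup>2 * (Y s)\<^sup>2)"
  proof (rule sum_mono)
    fix s
    have "b (X s - \<eta> * Y s) \<le> b (X s) + deriv b (X s) * ((X s - \<eta> * Y s) - X s) + Ub / 2 * ((X s - \<eta> * Y s) - X s)\<^sup>2"
      by (rule b_upper)
    thus "b (X s - \<eta> * Y s) - r s * (X s - \<eta> * Y s) \<le> (b (X s) - r s * X s) - \<eta> * (c s * Y s) + Ub / 2 * \<eta>\<^sup>2 * (Y s)\<^sup>2"
      unfolding c_def by (simp add: algebra_simps power2_eq_square)
  qed
  have Ysq: "(\<Sum>s=1..t-1. (Y s)\<^sup>2) \<le> real t * (real m * G\<^sup>2) * V"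
  proof -
    have "(\<Sum>s=1..t-1. (Y s)\<^sup>2) \<le> (\<Sum>s=1..t-1. (real m * G\<^sup>2) * V)"
    proof (rule sum_mono)
      fix s assume s: "s \<in> {1..t-1}"
      have "(Y s)\<^sup>2 \<le> ipp p (g s) (g s) * V" unfolding Y_def V_def by (rule ipp_CS)
      also have "ipp p (g s) (g s) = (nrmp p (g s))\<^sup>2" by (simp add: nrmp_sq)
      also have "(nrmp p (g s))\<^sup>2 \<le> (G * sqrt (real m))\<^sup>2"
        using gn s by (intro power_mono) (auto simp: nrmp_def ipp_self_nonneg)
      also have "(G * sqrt (real m))\<^sup>2 = real m * G\<^sup>2" by (simp add: power_mult_distrib)
      finally show "(Y s)\<^sup>2 \<le> real m * G\<^sup>2 * V" using V0 by (simp add: mult_right_mono)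
    qed
    also have "\<dots> = real (t - 1) * (real m * G\<^sup>2 * V)" by simp
    also have "\<dots> \<le> real t * (real m * G\<^sup>2 * V)"
      using V0 by (intro mult_right_mono) auto
    finally show ?thesis by simp
  qed
  have sumsplit: "(\<Sum>s=1..t-1. (b (X s) - r s * X s) - \<eta> * (c s * Y s) + Ub / 2 * \<eta>\<^sup>2 * (Y s)\<^sup>2)
     = (\<Sum>s=1..t-1. b (X s) - r s * X s) - \<eta> * (\<Sum>s=1..t-1. c s * Y s) + Ub / 2 * \<eta>\<^sup>2 * (\<Sum>s=1..t-1. (Y s)\<^sup>2)"
    by (simp add: sum.distrib sum_subtractf sum_distrib_left)
  define S2 where "S2 = (\<Sum>s=1..t-1. (Y s)\<^sup>2)"
  define CY where "CY = (\<Sum>s=1..t-1. c s * Y s)"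
  define B where "B = (\<Sum>s=1..t-1. b (X s) - r s * X s)"
  define Bn where "Bn = (\<Sum>s=1..t-1. b (X s - \<eta> * Y s) - r s * (X s - \<eta> * Y s))"
  define P where "P = ipp p d v"
  define Q where "Q = ipp p u v"
  have e1: "F \<theta>' \<le> B - \<eta> * CY + Ub / 2 * \<eta>\<^sup>2 * S2 + real m * lam / 2 * (ipp p d d - 2 * \<eta> * P + \<eta>\<^sup>2 * V)
      - sqrt (real t) * (ipp p u d - \<eta> * Q)"
    using Fth' bsum sumsplit unfolding B_def[symmetric] Bn_def[symmetric] S2_def[symmetric] CY_def[symmetric]
       P_def[symmetric] Q_def[symmetric] by linarith
  have e2: "CY + real m * lam * P - sqrt (real t) * Q = V"
    using key unfolding CY_def[symmetric] P_def[symmetric] Q_def[symmetric] .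
  have e3: "F \<theta> = B + real m * lam / 2 * ipp p d d - sqrt (real t) * ipp p u d"
    using Fth unfolding B_def .
  have e4: "B - \<eta> * CY + Ub / 2 * \<eta>\<^sup>2 * S2 + real m * lam / 2 * (ipp p d d - 2 * \<eta> * P + \<eta>\<^sup>2 * V)
      - sqrt (real t) * (ipp p u d - \<eta> * Q) = F \<theta> - \<eta> * (CY + real m * lam * P - sqrt (real t) * Q)
      + \<eta>\<^sup>2 / 2 * (Ub * S2 + real m * lam * V)"
    unfolding e3 by (simp add: algebra_simps)
  have "F \<theta>' \<le> F \<theta> - \<eta> * V + \<eta>\<^sup>2 / 2 * (Ub * S2 + real m * lam * V)"
    using e1[unfolded e4 e2] .
  also have "Ub * S2 \<le> Ub * (real t * (real m * G\<^sup>2) * V)"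
    using Ysq Ub0 unfolding S2_def by (rule mult_left_mono)
  hence "\<eta>\<^sup>2 / 2 * (Ub * S2 + real m * lam * V) \<le> \<eta>\<^sup>2 / 2 * ((real m * lam + Ub * real t * real m * G\<^sup>2) * V)"
    by (intro mult_left_mono) (auto simp: algebra_simps)
  also have "\<dots> = \<eta> / 2 * V * (\<eta> * (real m * lam + Ub * real t * real m * G\<^sup>2))"
    by (simp add: power2_eq_square)
  also have "\<dots> \<le> \<eta> / 2 * V * 1"
    using etaK eta0 V0 by (intro mult_left_mono) auto
  finally have "F \<theta>' \<le> F \<theta> - \<eta> / 2 * V" by (simp add: algebra_simps)
  moreover have "\<eta> / 2 * V \<ge> 0" using eta0 V0 by simp
  ultimately show ?thesis unfolding F_def \<theta>'_def by linarith
qed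


lemma lower:
  fixes G :: real
  assumes Lb0: "Lb > 0" and un: "nrmp p u \<le> G * sqrt (real m)"
  shows "lossL b p t g r u \<theta>0 m lam \<theta> \<ge> lossL b p t g r u \<theta>0 m lam \<theta>0
     - (real (t-1) * (deriv b 0)\<^sup>2 + (\<Sum>s=1..t-1. (r s)\<^sup>2)) / Lb
     + real m * lam / 2 * (nrmp p (\<lambda>k. \<theta> k - \<theta>0 k))\<^sup>2
     - sqrt (real t) * (G * sqrt (real m)) * nrmp p (\<lambda>k. \<theta> k - \<theta>0 k)"
proof -
  define d where "d = (\<lambda>k. \<theta> k - \<theta>0 k)"
  define X where "X = (\<lambda>s. ipp p (g s) d)"
  define b1 where "b1 = deriv b 0"
  have F0: "lossL b p t g r u \<theta>0 m lam \<theta>0 = real (t-1) * b 0"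
    unfolding lossL_def Let_def by (simp add: ipp_zero nrmp_def)
  have Fth: "lossL b p t g r u \<theta>0 m lam \<theta> = (\<Sum>s=1..t-1. b (X s) - r s * X s)
     + real m * lam / 2 * (nrmp p d)\<^sup>2 - sqrt (real t) * ipp p u d"
    unfolding lossL_def Let_def X_def d_def ..
  have each: "b (X s) - r s * X s \<ge> b 0 - (b1\<^sup>2 + (r s)\<^sup>2) / Lb" for s
  proof -
    have bl: "b (X s) \<ge> b 0 + b1 * X s + Lb / 2 * (X s)\<^sup>2"
      using b_lower[of 0 "X s"] unfolding b1_def by simp
    have id: "2 * (Lb * ((b1 - r s) * X s + Lb / 2 * (X s)\<^sup>2) + (b1\<^sup>2 + (r s)\<^sup>2))
        = (Lb * X s + (b1 - r s))\<^sup>2 + (b1 + r s)\<^sup>2"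
      by (simp add: power2_eq_square algebra_simps)
    have "Lb * ((b1 - r s) * X s + Lb / 2 * (X s)\<^sup>2) \<ge> - (b1\<^sup>2 + (r s)\<^sup>2)"
    proof -
      have "0 \<le> 2 * (Lb * ((b1 - r s) * X s + Lb / 2 * (X s)\<^sup>2) + (b1\<^sup>2 + (r s)\<^sup>2))"
        by (subst id) simp
      thus ?thesis by (rule aux_lin)
    qed
    hence "(b1 - r s) * X s + Lb / 2 * (X s)\<^sup>2 \<ge> - (b1\<^sup>2 + (r s)\<^sup>2) / Lb"
      using Lb0 by (simp add: divide_le_eq mult.commute)
    hence "b1 * X s - r s * X s + Lb / 2 * (X s)\<^sup>2 \<ge> - ((b1\<^sup>2 + (r s)\<^sup>2) / Lb)"
      by (simp add: left_diff_distrib minus_divide_left)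
    thus ?thesis using bl by linarith
  qed
  have "(\<Sum>s=1..t-1. b (X s) - r s * X s) \<ge> (\<Sum>s=1..t-1. b 0 - (b1\<^sup>2 + (r s)\<^sup>2) / Lb)"
    using each by (intro sum_mono) auto
  also have "(\<Sum>s=1..t-1. b 0 - (b1\<^sup>2 + (r s)\<^sup>2) / Lb)
     = real (t-1) * b 0 - (real (t-1) * b1\<^sup>2 + (\<Sum>s=1..t-1. (r s)\<^sup>2)) / Lb"
    by (simp add: sum_subtractf sum_divide_distrib[symmetric] sum.distrib)
  finally have S: "(\<Sum>s=1..t-1. b (X s) - r s * X s) \<ge> real (t-1) * b 0 - (real (t-1) * b1\<^sup>2 + (\<Sum>s=1..t-1. (r s)\<^sup>2)) / Lb" .
  have "ipp p u d \<le> nrmp p u * nrmp p d" using ipp_abs[of p u d] by linarith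
  also have "\<dots> \<le> G * sqrt (real m) * nrmp p d"
    using un by (intro mult_right_mono) (auto simp: nrmp_def ipp_self_nonneg)
  finally have "sqrt (real t) * ipp p u d \<le> sqrt (real t) * (G * sqrt (real m) * nrmp p d)"
    by (intro mult_left_mono) auto
  thus ?thesis using S Fth F0 unfolding d_def[symmetric] b1_def[symmetric] by (simp add: algebra_simps)
qed

end

lemma main_aux:
  fixes G A Lb b0 b1 :: real and b :: "real \<Rightarrow> real" and Ub lam \<eta> :: real and m t p j :: nat
  assumes G0: "G > 0" and A0: "A > 0" and Lb0: "Lb > 0"
    and h1: "\<forall>z. b differentiable at z" and h2: "\<forall>z. deriv b differentiable at z"
    and h3: "\<forall>z. Lb \<le> deriv (deriv b) z \<and> deriv (deriv b) z \<le> Ub"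
    and hb1: "deriv b 0 = b1"
    and m1: "m \<ge> 1" and lam0: "0 < lam" and lam1: "lam \<le> 1" and t3: "t \<ge> 3"
    and gn: "\<forall>s\<in>{1..t-1}. nrmp p (g s) \<le> G * sqrt (real m)"
    and un: "nrmp p u \<le> G * sqrt (real m)"
    and rs: "(\<Sum>s=1..t-1. (r s)\<^sup>2) \<le> A * real t * ln (real t)"
    and eta0: "0 < \<eta>" and eta1: "\<eta> \<le> 1 / (real m * lam + Ub * real t * real m * G\<^sup>2)"
  shows "nrmp p (\<lambda>i. gd p (lossL b p t g r u \<theta>0 m lam) \<eta> \<theta>0 j i - \<theta>0 i)
           \<le> (2 * G + sqrt (2 * ((b1\<^sup>2 + A) / Lb))) * sqrt (real t * ln (real t) / (real m * lam\<^sup>2))"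
proof -
  define F where "F = lossL b p t g r u \<theta>0 m lam"
  have Ub0: "Ub \<ge> 0" using h3 Lb0 by (meson less_le_trans order.strict_implies_order)
  have K0: "real m * lam + Ub * real t * real m * G\<^sup>2 > 0"
    using m1 lam0 Ub0 by (simp add: add_pos_nonneg)
  have etaK: "\<eta> * (real m * lam + Ub * real t * real m * G\<^sup>2) \<le> 1"
    using eta1 K0 by (simp add: le_divide_eq)
  have dec: "F (gd p F \<eta> \<theta>0 k) \<le> F \<theta>0" for k
  proof (induction k)
    case 0 show ?case by simp
  next
    case (Suc k)
    have "F (gd p F \<eta> \<theta>0 (Suc k)) \<le> F (gd p F \<eta> \<theta>0 k)"
      unfolding F_def gd.simps
      by (rule descent[OF h1 h2 h3 Ub0 G0 gn lam0 eta0 etaK])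
    thus ?case using Suc by simp
  qed
  define N where "N = nrmp p (\<lambda>i. gd p F \<eta> \<theta>0 j i - \<theta>0 i)"
  have low: "F (gd p F \<eta> \<theta>0 j) \<ge> F \<theta>0
     - (real (t-1) * (deriv b 0)\<^sup>2 + (\<Sum>s=1..t-1. (r s)\<^sup>2)) / Lb
     + real m * lam / 2 * N\<^sup>2 - sqrt (real t) * (G * sqrt (real m)) * N"
    unfolding F_def N_def by (rule lower[OF h1 h2 h3 Lb0 un])
  define C where "C = (b1\<^sup>2 + A) / Lb"
  have C0: "C \<ge> 0" unfolding C_def using A0 Lb0 by simp
  have ln1: "ln (real t) \<ge> 1"
    using t3 exp_le by (subst ln_ge_iff) auto
  have tT: "real t \<le> real t * ln (real t)" using ln1 t3 by (simp add: mult_le_cancel_left1)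
  have "real (t-1) * b1\<^sup>2 + (\<Sum>s=1..t-1. (r s)\<^sup>2) \<le> (real t * ln (real t)) * b1\<^sup>2 + A * (real t * ln (real t))"
  proof -
    have "real (t-1) \<le> real t * ln (real t)" using tT by simp
    hence "real (t-1) * b1\<^sup>2 \<le> (real t * ln (real t)) * b1\<^sup>2" by (intro mult_right_mono) auto
    thus ?thesis using rs by (simp add: mult.assoc)
  qed
  hence cT: "(real (t-1) * b1\<^sup>2 + (\<Sum>s=1..t-1. (r s)\<^sup>2)) / Lb \<le> C * (real t * ln (real t))"
    unfolding C_def using Lb0 by (simp add: divide_right_mono algebra_simps add_divide_distrib[symmetric])
  have q: "real m * lam / 2 * N\<^sup>2 \<le> sqrt (real t) * (G * sqrt (real m)) * N + C * (real t * ln (real t))"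
    using low[unfolded hb1] dec[of j] cT by linarith
  have N0: "N \<ge> 0" unfolding N_def nrmp_def by (simp add: ipp_self_nonneg)
  show ?thesis using finish[OF m1 lam0 lam1 t3 G0 C0 N0 q] unfolding N_def F_def C_def .
qed

theorem mainTheorem5:
  fixes G A Lb b0 b1 :: real
  assumes "G > 0" and "A > 0" and "Lb > 0"
  shows "\<exists>E>0. \<forall>(b :: real \<Rightarrow> real) (Ub :: real) (m :: nat) (lam :: real) (t :: nat) (p :: nat)
            (\<theta>0 :: nat \<Rightarrow> real) (g :: nat \<Rightarrow> nat \<Rightarrow> real) (u :: nat \<Rightarrow> real) (r :: nat \<Rightarrow> real)
            (\<eta> :: real) (j :: nat).
     (\<forall>z. b differentiable at z) \<and> (\<forall>z. deriv b differentiable at z) \<and>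
     (\<forall>z. Lb \<le> deriv (deriv b) z \<and> deriv (deriv b) z \<le> Ub) \<and>
     b 0 = b0 \<and> deriv b 0 = b1 \<and>
     m \<ge> 1 \<and> 0 < lam \<and> lam \<le> 1 \<and> t \<ge> 3 \<and>
     (\<forall>s\<in>{1..t-1}. nrmp p (g s) \<le> G * sqrt (real m)) \<and>
     nrmp p u \<le> G * sqrt (real m) \<and>
     (\<Sum>s=1..t-1. (r s)\<^sup>2) \<le> A * real t * ln (real t) \<and>
     0 < \<eta> \<and> \<eta> \<le> 1 / (real m * lam + Ub * real t * real m * G\<^sup>2)
     \<longrightarrow> nrmp p (\<lambda>i. gd p (lossL b p t g r u \<theta>0 m lam) \<eta> \<theta>0 j i - \<theta>0 i)
           \<le> E * sqrt (real t * ln (real t) / (real m * lam\<^sup>2))"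
proof -
  define E where "E = 2 * G + sqrt (2 * ((b1\<^sup>2 + A) / Lb))"
  have E0: "E > 0" unfolding E_def using assms by (simp add: add_pos_nonneg)
  show ?thesis
    apply (rule exI[of _ E])
    apply (intro conjI allI impI)
     apply (rule E0)
    apply (elim conjE)
    unfolding E_def
    apply (rule main_aux[OF assms])
                  apply assumption+
    done
qed

end
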